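(* Let $c\ge0$, $d\in\{0,1,2,\dots\}$, $\lambda>0$, $q=e^{-\lambda/N}$, $\mathsf{s}=e^{-\lambda}$, and fix integers $p\ge1$, $0\le i\le p$. Then as $N\to\infty$, $$\int_0^1 f_i^{(c,d)}(Nt)\,dt=\Big(\frac{N}{\lambda}\Big)^p\frac{1}{i!(p-i)!}\Big(\mathcal{A}_{i,0}+\big(\mathcal{A}^{(1)}_{i,1}+\mathcal{A}^{(2)}_{i,1}+\mathcal{A}^{(3)}_{i,1}\big)\frac{\lambda}{N}+O(N^{-2})\Big),$$ where $\mathcal{A}_{i,0}=\mathsf{s}^{c(p-i)}\int_0^1\mathsf{s}^{pt}(1-\mathsf{s}^t)^{p-i}(1-\mathsf{s}^{c+t})^i\,dt$, $\mathcal{A}^{(1)}_{i,1}=\mathsf{s}^{c(p-i+1)}\frac{i(2d-i+1)}{2}\int_0^1\mathsf{s}^{(p+1)t}(1-\mathsf{s}^t)^{p-i}(1-\mathsf{s}^{c+t})^{i-1}\,dt$, $\mathcal{A}^{(2)}_{i,1}=\mathsf{s}^{c(p-i)}\frac{(p-i)(p-i+1)}{2}\int_0^1\mathsf{s}^{(p+1)t}(1-\mathsf{s}^t)^{p-i-1}(1-\mathsf{s}^{c+t})^{i}\,dt$, $\mathcal{A}^{(3)}_{i,1}=\frac{4di+2i^2+p-4dp-2ip+p^2}{4}\mathcal{A}_{i,0}$.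
   Context: For real $x$ and integer $m\ge0$ define $\begin{bmatrix} x\\ m\end{bmatrix}_q=\prod_{k=1}^{m}\frac{1-q^{x-m+k}}{1-q^{k}}$ (the usual $q$-binomial when $x$ is an integer). For real $y\ge0$ define $f_i^{(c,d)}(y)=q^{(cN+d)(p-i)+py}\begin{bmatrix} cN+d+y\\ i\end{bmatrix}_q\begin{bmatrix} p-i+y\\ p-i\end{bmatrix}_q$. *)

theory Defs
  imports "HOL-Analysis.Analysis" "HOL-Library.Landau_Symbols"
begin

definition qbinom :: "real \<Rightarrow> real \<Rightarrow> nat \<Rightarrow> real" where
  "qbinom q x m = (\<Prod>k=1..m. (1 - q powr (x - real m + real k)) / (1 - q ^ k))"

definition fcd :: "real \<Rightarrow> nat \<Rightarrow> nat \<Rightarrow> real \<Rightarrow> real \<Rightarrow> nat \<Rightarrow> real \<Rightarrow> real" where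
  "fcd q p i c N d y =
     q powr ((c * N + real d) * real (p - i) + real p * y)
     * qbinom q (c * N + real d + y) i
     * qbinom q (real (p - i) + y) (p - i)"

end

theory Submission
  imports Defs
begin

definition TE :: "(real \<Rightarrow> real \<Rightarrow> real) \<Rightarrow> (real \<Rightarrow> real) \<Rightarrow> (real \<Rightarrow> real) \<Rightarrow> bool" where
  "TE f a b \<longleftrightarrow> (\<exists>M. \<forall>t\<in>{0..1}. \<bar>a t\<bar> \<le> M \<and> \<bar>b t\<bar> \<le> M) \<and>
     (\<exists>C \<delta>. \<delta> > 0 \<and> (\<forall>u t. 0 < u \<longrightarrow> u < \<delta> \<longrightarrow> t \<in> {0..1} \<longrightarrow> \<bar>f u t - a t - b t * u\<bar> \<le> C * u^2))"

lemma TE_cong: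
  assumes "TE f a b" "\<And>t. t \<in> {0..1} \<Longrightarrow> a t = a' t" "\<And>t. t \<in> {0..1} \<Longrightarrow> b t = b' t"
    "\<And>u t. 0 < u \<Longrightarrow> t \<in> {0..1} \<Longrightarrow> f u t = f' u t"
  shows "TE f' a' b'"
proof -
  from assms(1) obtain M C \<delta> where M: "\<forall>t\<in>{0..1}. \<bar>a t\<bar> \<le> M \<and> \<bar>b t\<bar> \<le> M" and
    d: "\<delta> > 0" and C: "\<forall>u t. 0 < u \<longrightarrow> u < \<delta> \<longrightarrow> t \<in> {0..1} \<longrightarrow> \<bar>f u t - a t - b t * u\<bar> \<le> C * u^2"
    unfolding TE_def by blast
  have 1: "\<forall>t\<in>{0..1}. \<bar>a' t\<bar> \<le> M \<and> \<bar>b' t\<bar> \<le> M" using M assms(2,3) by auto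
  have 2: "\<forall>u t. 0 < u \<longrightarrow> u < \<delta> \<longrightarrow> t \<in> {0..1} \<longrightarrow> \<bar>f' u t - a' t - b' t * u\<bar> \<le> C * u^2"
    using C assms(2-4) by auto
  show ?thesis unfolding TE_def using 1 2 d by blast
qed

lemma TE_const:
  assumes "\<And>t. t \<in> {0..1} \<Longrightarrow> \<bar>g t\<bar> \<le> M"
  shows "TE (\<lambda>u t. g t) g (\<lambda>t. 0)"
proof -
  have 1: "\<forall>t\<in>{0..1}. \<bar>g t\<bar> \<le> max M 0 \<and> \<bar>(\<lambda>t. 0::real) t\<bar> \<le> max M 0" using assms by force
  have 2: "\<forall>u t. 0 < u \<longrightarrow> u < 1 \<longrightarrow> t \<in> {0..1} \<longrightarrow> \<bar>g t - g t - 0 * u\<bar> \<le> 0 * u^2" by simp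
  show ?thesis unfolding TE_def using 1 2 by (metis zero_less_one)
qed

lemma TE_add:
  assumes "TE f a b" "TE g a' b'"
  shows "TE (\<lambda>u t. f u t + g u t) (\<lambda>t. a t + a' t) (\<lambda>t. b t + b' t)"
proof -
  from assms(1) obtain M C \<delta> where M: "\<forall>t\<in>{0..1}. \<bar>a t\<bar> \<le> M \<and> \<bar>b t\<bar> \<le> M" and
    d: "\<delta> > 0" and C: "\<forall>u t. 0 < u \<longrightarrow> u < \<delta> \<longrightarrow> t \<in> {0..1} \<longrightarrow> \<bar>f u t - a t - b t * u\<bar> \<le> C * u^2"
    unfolding TE_def by blast
  from assms(2) obtain M' C' \<delta>' where M': "\<forall>t\<in>{0..1}. \<bar>a' t\<bar> \<le> M' \<and> \<bar>b' t\<bar> \<le> M'" and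
    d': "\<delta>' > 0" and C': "\<forall>u t. 0 < u \<longrightarrow> u < \<delta>' \<longrightarrow> t \<in> {0..1} \<longrightarrow> \<bar>g u t - a' t - b' t * u\<bar> \<le> C' * u^2"
    unfolding TE_def by blast
  have B: "\<forall>t\<in>{0..1}. \<bar>a t + a' t\<bar> \<le> M + M' \<and> \<bar>b t + b' t\<bar> \<le> M + M'"
  proof
    fix t :: real assume t: "t \<in> {0..1}"
    show "\<bar>a t + a' t\<bar> \<le> M + M' \<and> \<bar>b t + b' t\<bar> \<le> M + M'" using M M' t by force
  qed
  have R: "\<forall>u t. 0 < u \<longrightarrow> u < min \<delta> \<delta>' \<longrightarrow> t \<in> {0..1} \<longrightarrow> \<bar>f u t + g u t - (a t + a' t) - (b t + b' t) * u\<bar> \<le> (C + C') * u^2"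
  proof (intro allI impI)
    fix u t :: real assume u: "0 < u" "u < min \<delta> \<delta>'" and t: "t \<in> {0..1}"
    have 1: "\<bar>f u t - a t - b t * u\<bar> \<le> C * u^2" using C u t by auto
    have 2: "\<bar>g u t - a' t - b' t * u\<bar> \<le> C' * u^2" using C' u t by auto
    show "\<bar>f u t + g u t - (a t + a' t) - (b t + b' t) * u\<bar> \<le> (C + C') * u^2"
      using 1 2 by (simp add: distrib_right algebra_simps)
  qed
  have "min \<delta> \<delta>' > 0" using d d' by simp
  then show ?thesis unfolding TE_def using B R by blast
qed

lemma TE_mult:
  assumes "TE f a b" "TE g a' b'"
  shows "TE (\<lambda>u t. f u t * g u t) (\<lambda>t. a t * a' t) (\<lambda>t. a t * b' t + b t * a' t)"
proof -
  from assms(1) obtain M C \<delta> where M: "\<forall>t\<in>{0..1}. \<bar>a t\<bar> \<le> M \<and> \<bar>b t\<bar> \<le> M" and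
    d: "\<delta> > 0" and C: "\<forall>u t. 0 < u \<longrightarrow> u < \<delta> \<longrightarrow> t \<in> {0..1} \<longrightarrow> \<bar>f u t - a t - b t * u\<bar> \<le> C * u^2"
    unfolding TE_def by blast
  from assms(2) obtain M' C' \<delta>' where M': "\<forall>t\<in>{0..1}. \<bar>a' t\<bar> \<le> M' \<and> \<bar>b' t\<bar> \<le> M'" and
    d': "\<delta>' > 0" and C': "\<forall>u t. 0 < u \<longrightarrow> u < \<delta>' \<longrightarrow> t \<in> {0..1} \<longrightarrow> \<bar>g u t - a' t - b' t * u\<bar> \<le> C' * u^2"
    unfolding TE_def by blast
  define K where "K = \<bar>M\<bar> * \<bar>C'\<bar> + \<bar>M\<bar> * (\<bar>M'\<bar> + \<bar>C'\<bar>) + \<bar>C\<bar> * (2*\<bar>M'\<bar> + \<bar>C'\<bar>)"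
  have B: "\<forall>t\<in>{0..1}. \<bar>a t * a' t\<bar> \<le> 2 * \<bar>M\<bar> * \<bar>M'\<bar> \<and> \<bar>a t * b' t + b t * a' t\<bar> \<le> 2 * \<bar>M\<bar> * \<bar>M'\<bar>"
  proof (intro ballI conjI)
    fix t :: real assume t: "t \<in> {0..1}"
    have a: "\<bar>a t\<bar> \<le> \<bar>M\<bar>" "\<bar>b t\<bar> \<le> \<bar>M\<bar>" "\<bar>a' t\<bar> \<le> \<bar>M'\<bar>" "\<bar>b' t\<bar> \<le> \<bar>M'\<bar>" using M M' t by force+
    have "\<bar>a t * a' t\<bar> \<le> \<bar>M\<bar> * \<bar>M'\<bar>" unfolding abs_mult by (intro mult_mono a) auto
    then show "\<bar>a t * a' t\<bar> \<le> 2 * \<bar>M\<bar> * \<bar>M'\<bar>" using mult_nonneg_nonneg[OF abs_ge_zero abs_ge_zero, of M M'] by linarith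
    have "\<bar>a t * b' t\<bar> \<le> \<bar>M\<bar> * \<bar>M'\<bar>" unfolding abs_mult by (intro mult_mono a) auto
    moreover have "\<bar>b t * a' t\<bar> \<le> \<bar>M\<bar> * \<bar>M'\<bar>" unfolding abs_mult by (intro mult_mono a) auto
    ultimately show "\<bar>a t * b' t + b t * a' t\<bar> \<le> 2 * \<bar>M\<bar> * \<bar>M'\<bar>" by linarith
  qed
  have R: "\<forall>u t. 0 < u \<longrightarrow> u < min 1 (min \<delta> \<delta>') \<longrightarrow> t \<in> {0..1} \<longrightarrow> \<bar>f u t * g u t - a t * a' t - (a t * b' t + b t * a' t) * u\<bar> \<le> K * u^2"
  proof (intro allI impI)
    fix u t :: real assume u: "0 < u" "u < min 1 (min \<delta> \<delta>')" and t: "t \<in> {0..1}"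
    have a: "\<bar>a t\<bar> \<le> \<bar>M\<bar>" "\<bar>b t\<bar> \<le> \<bar>M\<bar>" "\<bar>a' t\<bar> \<le> \<bar>M'\<bar>" "\<bar>b' t\<bar> \<le> \<bar>M'\<bar>" using M M' t by force+
    define e1 where "e1 = f u t - a t - b t * u"
    define e2 where "e2 = g u t - a' t - b' t * u"
    have 1: "\<bar>e1\<bar> \<le> \<bar>C\<bar> * u^2"
    proof -
      have "\<bar>e1\<bar> \<le> C * u^2" using C u t unfolding e1_def by auto
      moreover have "C * u^2 \<le> \<bar>C\<bar> * u^2" by (intro mult_right_mono) auto
      ultimately show ?thesis by linarith
    qed
    have 2: "\<bar>e2\<bar> \<le> \<bar>C'\<bar> * u^2"
    proof -
      have "\<bar>e2\<bar> \<le> C' * u^2" using C' u t unfolding e2_def by auto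
      moreover have "C' * u^2 \<le> \<bar>C'\<bar> * u^2" by (intro mult_right_mono) auto
      ultimately show ?thesis by linarith
    qed
    have u1: "u \<le> 1" "u^2 \<le> u" using u by (auto simp: power2_eq_square mult_le_cancel_right1 less_imp_le)
    have g: "g u t = a' t + b' t * u + e2" unfolding e2_def by simp
    have eq: "f u t * g u t - a t * a' t - (a t * b' t + b t * a' t) * u = a t * e2 + b t * u * (b' t * u + e2) + e1 * g u t"
      unfolding e1_def g by (simp add: algebra_simps)
    have b1: "\<bar>a t * e2\<bar> \<le> \<bar>M\<bar> * (\<bar>C'\<bar> * u^2)" unfolding abs_mult by (intro mult_mono a 2) auto
    have "\<bar>b' t * u + e2\<bar> \<le> \<bar>M'\<bar> * u + \<bar>C'\<bar> * u^2"
    proof -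
      have "\<bar>b' t * u\<bar> \<le> \<bar>M'\<bar> * u" unfolding abs_mult using a u by (intro mult_mono) auto
      then show ?thesis using 2 by linarith
    qed
    also have "\<dots> \<le> (\<bar>M'\<bar> + \<bar>C'\<bar>) * u" using mult_left_mono[OF u1(2), of "\<bar>C'\<bar>"] by (simp add: algebra_simps)
    finally have "\<bar>b' t * u + e2\<bar> \<le> (\<bar>M'\<bar> + \<bar>C'\<bar>) * u" .
    then have b2: "\<bar>b t * u * (b' t * u + e2)\<bar> \<le> (\<bar>M\<bar> * u) * ((\<bar>M'\<bar> + \<bar>C'\<bar>) * u)"
      unfolding abs_mult using a u by (intro mult_mono) auto
    have "\<bar>g u t\<bar> \<le> \<bar>M'\<bar> + \<bar>M'\<bar> * u + \<bar>C'\<bar> * u^2"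
    proof -
      have "\<bar>b' t * u\<bar> \<le> \<bar>M'\<bar> * u" unfolding abs_mult using a u by (intro mult_mono) auto
      then show ?thesis unfolding g using 2 a by linarith
    qed
    also have "\<dots> \<le> 2*\<bar>M'\<bar> + \<bar>C'\<bar>" using u1
    proof -
      have "\<bar>M'\<bar> * u \<le> \<bar>M'\<bar>" using u1 by (intro mult_left_le) auto
      moreover have "\<bar>C'\<bar> * u^2 \<le> \<bar>C'\<bar>" using u1 by (intro mult_left_le) auto
      ultimately show ?thesis by linarith
    qed
    finally have "\<bar>g u t\<bar> \<le> 2*\<bar>M'\<bar> + \<bar>C'\<bar>" .
    then have b3: "\<bar>e1 * g u t\<bar> \<le> (\<bar>C\<bar> * u^2) * (2*\<bar>M'\<bar> + \<bar>C'\<bar>)"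
      unfolding abs_mult using 1 by (intro mult_mono) auto
    have "\<bar>f u t * g u t - a t * a' t - (a t * b' t + b t * a' t) * u\<bar> \<le>
       \<bar>M\<bar> * (\<bar>C'\<bar> * u^2) + (\<bar>M\<bar> * u) * ((\<bar>M'\<bar> + \<bar>C'\<bar>) * u) + (\<bar>C\<bar> * u^2) * (2*\<bar>M'\<bar> + \<bar>C'\<bar>)"
      unfolding eq using b1 b2 b3 by linarith
    also have "\<dots> = (\<bar>M\<bar> * \<bar>C'\<bar> + \<bar>M\<bar> * (\<bar>M'\<bar> + \<bar>C'\<bar>) + \<bar>C\<bar> * (2*\<bar>M'\<bar> + \<bar>C'\<bar>)) * u^2"
      by (simp add: algebra_simps power2_eq_square)
    finally show "\<bar>f u t * g u t - a t * a' t - (a t * b' t + b t * a' t) * u\<bar> \<le> K * u^2" unfolding K_def .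
  qed
  have "min 1 (min \<delta> \<delta>') > 0" using d d' by simp
  then show ?thesis unfolding TE_def using B R by blast
qed


lemma exp_rem2:
  fixes x :: real assumes "\<bar>x\<bar> \<le> 1"
  shows "\<bar>exp x - 1 - x\<bar> \<le> 2 * x^2"
proof -
  obtain t where t: "\<bar>t\<bar> \<le> \<bar>x\<bar>" "exp x = (\<Sum>m<2. x^m / fact m) + (exp t / fact 2) * x^2"
    using Maclaurin_exp_le[of x 2] by blast
  have "t \<le> 1" using t(1) assms by linarith
  then have "exp t \<le> exp 1" by simp
  then have e: "exp t \<le> 3" using exp_le by linarith
  have eq: "exp x - 1 - x = (exp t / 2) * x^2" using t(2) by (simp add: numeral_2_eq_2)
  have "\<bar>exp x - 1 - x\<bar> = (exp t / 2) * x^2" unfolding eq by (simp add: abs_mult)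
  also have "\<dots> \<le> 2 * x^2" using e by (intro mult_right_mono) auto
  finally show ?thesis .
qed

lemma exp_rem3:
  fixes x :: real assumes "\<bar>x\<bar> \<le> 1"
  shows "\<bar>exp x - 1 - x - x^2/2\<bar> \<le> \<bar>x\<bar>^3"
proof -
  obtain t where t: "\<bar>t\<bar> \<le> \<bar>x\<bar>" "exp x = (\<Sum>m<3. x^m / fact m) + (exp t / fact 3) * x^3"
    using Maclaurin_exp_le[of x 3] by blast
  have "t \<le> 1" using t(1) assms by linarith
  then have "exp t \<le> exp 1" by simp
  then have e: "exp t \<le> 3" using exp_le by linarith
  have f3: "(fact 3 :: real) = 6" by (simp add: fact_numeral)
  have eq: "exp x - 1 - x - x^2/2 = (exp t / 6) * x^3" using t(2) f3 by (simp add: numeral_3_eq_3 power2_eq_square)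
  have "\<bar>exp x - 1 - x - x^2/2\<bar> = (exp t / 6) * \<bar>x\<bar>^3" unfolding eq by (simp add: abs_mult power_abs)
  also have "\<dots> \<le> \<bar>x\<bar>^3" using e by (intro mult_left_le_one_le) auto
  finally show ?thesis .
qed

lemma TE_exp: "TE (\<lambda>u t. exp (- (u * r))) (\<lambda>t. 1) (\<lambda>t. - r)"
proof -
  have 1: "\<forall>t\<in>{0..1}. \<bar>(\<lambda>t. 1::real) t\<bar> \<le> 1 + \<bar>r\<bar> \<and> \<bar>(\<lambda>t. - r) t\<bar> \<le> 1 + \<bar>r\<bar>" by auto
  have 2: "\<forall>u t. 0 < u \<longrightarrow> u < 1 / (\<bar>r\<bar> + 1) \<longrightarrow> t \<in> {0..1} \<longrightarrow>
      \<bar>exp (- (u * r)) - 1 - (- r) * u\<bar> \<le> (2 * r^2) * u^2"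
  proof (intro allI impI)
    fix u t :: real assume u: "0 < u" "u < 1 / (\<bar>r\<bar> + 1)"
    have "u * (\<bar>r\<bar> + 1) < 1" using u by (simp add: field_simps)
    then have "\<bar>- (u * r)\<bar> \<le> 1" using u by (simp add: abs_mult algebra_simps)
    from exp_rem2[OF this] show "\<bar>exp (- (u * r)) - 1 - (- r) * u\<bar> \<le> (2 * r^2) * u^2"
      by (simp add: algebra_simps power2_eq_square)
  qed
  have 3: "(0::real) < 1 / (\<bar>r\<bar> + 1)" by (simp add: add_pos_nonneg)
  show ?thesis unfolding TE_def using 1 2 3 by blast
qed

lemma TE_Efac:
  assumes k: "k > 0"
  shows "TE (\<lambda>u t. (1 - exp (- (u * k))) / (u * k)) (\<lambda>t. 1) (\<lambda>t. - k / 2)"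
proof -
  have 1: "\<forall>t\<in>{0..1}. \<bar>(\<lambda>t. 1::real) t\<bar> \<le> 1 + k \<and> \<bar>(\<lambda>t. - k / 2) t\<bar> \<le> 1 + k" using k by auto
  have 2: "\<forall>u t. 0 < u \<longrightarrow> u < 1 / k \<longrightarrow> t \<in> {0..1} \<longrightarrow>
      \<bar>(1 - exp (- (u * k))) / (u * k) - 1 - (- k / 2) * u\<bar> \<le> (k^2) * u^2"
  proof (intro allI impI)
    fix u t :: real assume u: "0 < u" "u < 1 / k"
    define x where "x = u * k"
    have x: "0 < x" "x < 1" using u k by (auto simp: x_def field_simps)
    have "\<bar>exp (- x) - 1 - (- x) - (- x)^2/2\<bar> \<le> \<bar>- x\<bar>^3" using x by (intro exp_rem3) auto
    then have h: "\<bar>exp (- x) - 1 + x - x^2/2\<bar> \<le> x^3" using x by simp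
    have ku: "(- k / 2) * u = - x / 2" by (simp add: x_def)
    have "(1 - exp (- (u * k))) / (u * k) - 1 - (- k / 2) * u = (1 - exp (- x)) / x - 1 - (- x / 2)"
      unfolding ku by (simp add: x_def)
    also have "\<dots> = - (exp (- x) - 1 + x - x^2/2) / x"
      using x by (simp add: field_simps power2_eq_square)
    finally have "(1 - exp (- (u * k))) / (u * k) - 1 - (- k / 2) * u = - (exp (- x) - 1 + x - x^2/2) / x" .
    then have "\<bar>(1 - exp (- (u * k))) / (u * k) - 1 - (- k / 2) * u\<bar> = \<bar>exp (- x) - 1 + x - x^2/2\<bar> / x"
      using x by simp
    also have "\<dots> \<le> x^3 / x" using h x by (intro divide_right_mono) auto
    also have "\<dots> = k^2 * u^2" using x unfolding x_def by (simp add: power2_eq_square power3_eq_cube)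
    finally show "\<bar>(1 - exp (- (u * k))) / (u * k) - 1 - (- k / 2) * u\<bar> \<le> (k^2) * u^2" .
  qed
  have 3: "(0::real) < 1 / k" using k by simp
  show ?thesis unfolding TE_def using 1 2 3 by blast
qed

lemma TE_bounded: "TE f a b \<Longrightarrow> \<exists>M. \<forall>t\<in>{0..1}. \<bar>a t\<bar> \<le> M"
  unfolding TE_def by blast

lemma TE_prod:
  assumes "finite K" "\<And>k. k \<in> K \<Longrightarrow> TE (f k) a (\<beta> k)" "\<And>t. t \<in> {0..1} \<Longrightarrow> \<bar>a t\<bar> \<le> Ma"
  shows "TE (\<lambda>u t. \<Prod>k\<in>K. f k u t) (\<lambda>t. a t ^ card K) (\<lambda>t. (\<Sum>k\<in>K. \<beta> k t) * a t ^ (card K - 1))"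
  using assms(1,2)
proof (induction K rule: finite_induct)
  case empty
  have "TE (\<lambda>u t. 1) (\<lambda>t. 1) (\<lambda>t. 0)" by (rule TE_const[where M=1]) auto
  then show ?case by simp
next
  case (insert x F)
  have IH: "TE (\<lambda>u t. \<Prod>k\<in>F. f k u t) (\<lambda>t. a t ^ card F) (\<lambda>t. (\<Sum>k\<in>F. \<beta> k t) * a t ^ (card F - 1))"
    using insert by auto
  have fx: "TE (f x) a (\<beta> x)" using insert by auto
  from TE_mult[OF fx IH] show ?case
  proof (rule TE_cong)
    fix t :: real
    show "a t * a t ^ card F = a t ^ card (insert x F)" using insert by simp
    show "a t * ((\<Sum>k\<in>F. \<beta> k t) * a t ^ (card F - 1)) + \<beta> x t * a t ^ card F =
       (\<Sum>k\<in>insert x F. \<beta> k t) * a t ^ (card (insert x F) - 1)"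
    proof (cases "F = {}")
      case True then show ?thesis by simp
    next
      case False
      then have "card F \<ge> 1" using insert by (simp add: Suc_leI card_gt_0_iff)
      then have "a t * a t ^ (card F - 1) = a t ^ card F" by (metis le_add_diff_inverse power_Suc plus_1_eq_Suc)
      then show ?thesis using insert by (simp add: algebra_simps)
    qed
    fix u show "f x u t * (\<Prod>k\<in>F. f k u t) = (\<Prod>k\<in>insert x F. f k u t)" using insert by simp
  qed
qed

lemma TE_integral:
  assumes "TE f a b" "\<And>u. u > 0 \<Longrightarrow> continuous_on {0..1} (f u)"
    "continuous_on {0..1} a" "continuous_on {0..1} b"
  shows "\<exists>C \<delta>. \<delta> > 0 \<and> (\<forall>u. 0 < u \<longrightarrow> u < \<delta> \<longrightarrow>
     \<bar>integral {0..1} (f u) - integral {0..1} a - integral {0..1} b * u\<bar> \<le> C * u^2)"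
proof -
  from assms(1) obtain C \<delta> where d: "\<delta> > 0" and C: "\<forall>u t. 0 < u \<longrightarrow> u < \<delta> \<longrightarrow> t \<in> {0..1} \<longrightarrow> \<bar>f u t - a t - b t * u\<bar> \<le> C * u^2"
    unfolding TE_def by blast
  have "\<forall>u. 0 < u \<longrightarrow> u < \<delta> \<longrightarrow>
     \<bar>integral {0..1} (f u) - integral {0..1} a - integral {0..1} b * u\<bar> \<le> C * u^2"
  proof (intro allI impI)
    fix u :: real assume u: "0 < u" "u < \<delta>"
    have ia: "a integrable_on {0..1}" "b integrable_on {0..1}" "f u integrable_on {0..1}"
      using assms(2-4) u by (auto intro: integrable_continuous_interval)
    have ib: "(\<lambda>t. b t * u) integrable_on {0..1}" using ia(2) by (rule integrable_on_mult_left)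
    have ic: "(\<lambda>t. f u t - a t) integrable_on {0..1}" using ia by (intro integrable_diff)
    have "integral {0..1} (\<lambda>t. f u t - a t - b t * u) = integral {0..1} (f u) - integral {0..1} a - integral {0..1} b * u"
      by (simp add: integral_diff[OF ic ib] integral_diff[OF ia(3) ia(1)])
    moreover have "norm (integral {0..1} (\<lambda>t. f u t - a t - b t * u)) \<le> (C * u^2) * (1 - 0)"
      by (rule integral_bound) (use C u in \<open>auto intro!: continuous_intros assms(2-4)\<close>)
    ultimately show "\<bar>integral {0..1} (f u) - integral {0..1} a - integral {0..1} b * u\<bar> \<le> C * u^2" by simp
  qed
  then show ?thesis using d by blast
qed


lemma TE_fac:
  assumes "\<And>t. t \<in> {0..1} \<Longrightarrow> \<bar>g t\<bar> \<le> Mg"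
  shows "TE (\<lambda>u t. 1 - g t * exp (- (u * r))) (\<lambda>t. 1 - g t) (\<lambda>t. g t * r)"
proof -
  have h1: "TE (\<lambda>u t. 1) (\<lambda>t. 1) (\<lambda>t. 0)" by (rule TE_const[where M=1]) auto
  have h2: "TE (\<lambda>u t. - g t) (\<lambda>t. - g t) (\<lambda>t. 0)" by (rule TE_const[where M=Mg]) (use assms in auto)
  from TE_add[OF h1 TE_mult[OF h2 TE_exp[of r]]] show ?thesis
    by (rule TE_cong) (auto simp: algebra_simps)
qed

lemma sum_shift: "(\<Sum>k\<in>{1..i}. real d - real i + real k) = real i * (2 * real d - real i + 1) / 2"
proof -
  have "(\<Sum>k\<in>{1..i}. real d - real i + real k) = real i * (real d - real i) + (\<Sum>k\<in>{1..i}. real k)"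
    by (simp add: sum.distrib)
  also have "(\<Sum>k\<in>{1..i}. real k) = real i * (real i + 1) / 2"
    using double_gauss_sum_from_Suc_0[of i, where 'a=real] by simp
  finally show ?thesis by (simp add: field_simps)
qed

lemma sum_id: "(\<Sum>k\<in>{1..n}. real k) = real n * (real n + 1) / 2"
  using double_gauss_sum_from_Suc_0[of n, where 'a=real] by simp

lemma final_est:
  fixes J A0 J1 u E \<sigma> B C1 C2 :: real
  assumes h1: "\<bar>J - A0 - J1*u\<bar> \<le> C1*u^2" and h2: "\<bar>E - 1 - (-\<sigma>)*u\<bar> \<le> C2*u^2"
    and hJ: "J1 = B - \<sigma>*A0" and u: "0 < u" "u \<le> 1" and us: "\<bar>\<sigma>\<bar>*u + \<bar>C2\<bar>*u \<le> 1/2"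
  shows "\<bar>J/E - (A0 + B*u)\<bar> \<le> 2*(\<bar>C1\<bar> + \<bar>C2\<bar>*(\<bar>A0\<bar>+\<bar>B\<bar>) + \<bar>\<sigma>\<bar>*\<bar>B\<bar>) * u^2"
proof -
  have u2: "u^2 \<le> u" using u by (simp add: power2_eq_square mult_le_cancel_left1)
  have c2: "C2*u^2 \<le> \<bar>C2\<bar>*u" using mult_mono[OF abs_ge_self u2, of C2] u by simp
  have su: "\<sigma>*u \<le> \<bar>\<sigma>\<bar>*u" using u by (intro mult_right_mono) auto
  have E: "E \<ge> 1/2" using h2 c2 su us by linarith
  have id: "J - E*(A0+B*u) = (J - A0 - J1*u) - (A0+B*u)*(E - 1 - (-\<sigma>)*u) + \<sigma>*B*u^2"
    unfolding hJ by (simp add: algebra_simps power2_eq_square)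
  have AB: "\<bar>A0+B*u\<bar> \<le> \<bar>A0\<bar>+\<bar>B\<bar>"
  proof -
    have "\<bar>B*u\<bar> \<le> \<bar>B\<bar>" using u by (simp add: abs_mult mult_left_le)
    then show ?thesis by linarith
  qed
  have t2: "\<bar>(A0+B*u)*(E - 1 - (-\<sigma>)*u)\<bar> \<le> (\<bar>A0\<bar>+\<bar>B\<bar>) * (\<bar>C2\<bar>*u^2)"
  proof -
    have "\<bar>E - 1 - (-\<sigma>)*u\<bar> \<le> \<bar>C2\<bar>*u^2" using h2 mult_right_mono[OF abs_ge_self, of "u^2" C2] by simp
    then show ?thesis unfolding abs_mult by (intro mult_mono AB) auto
  qed
  have t1: "\<bar>J - A0 - J1*u\<bar> \<le> \<bar>C1\<bar>*u^2" using h1 mult_right_mono[OF abs_ge_self, of "u^2" C1] by simp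
  have t3: "\<bar>\<sigma>*B*u^2\<bar> = \<bar>\<sigma>\<bar>*\<bar>B\<bar>*u^2" by (simp add: abs_mult)
  have N: "\<bar>J - E*(A0+B*u)\<bar> \<le> (\<bar>C1\<bar> + \<bar>C2\<bar>*(\<bar>A0\<bar>+\<bar>B\<bar>) + \<bar>\<sigma>\<bar>*\<bar>B\<bar>) * u^2"
    unfolding id using t1 t2 t3 by (simp add: algebra_simps) linarith
  have "J/E - (A0 + B*u) = (J - E*(A0+B*u)) / E" using E by (simp add: field_simps)
  then have "\<bar>J/E - (A0 + B*u)\<bar> = \<bar>J - E*(A0+B*u)\<bar> / E" using E by simp
  also have "\<dots> \<le> \<bar>J - E*(A0+B*u)\<bar> / (1/2)" by (rule divide_left_mono) (use E in auto)
  also have "\<dots> = \<bar>J - E*(A0+B*u)\<bar> * 2" by simp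
  also have "\<dots> \<le> (\<bar>C1\<bar> + \<bar>C2\<bar>*(\<bar>A0\<bar>+\<bar>B\<bar>) + \<bar>\<sigma>\<bar>*\<bar>B\<bar>) * u^2 * 2" using N by simp
  finally show ?thesis by (simp add: algebra_simps)
qed

definition EE :: "nat \<Rightarrow> nat \<Rightarrow> real \<Rightarrow> real" where
  "EE i m u = (\<Prod>k\<in>{1..i}. (1 - exp (- (u * real k))) / (u * real k)) * (\<Prod>k\<in>{1..m}. (1 - exp (- (u * real k))) / (u * real k))"

lemma sum_half: "(\<Sum>k\<in>{1..n}. - real k / 2) = - (real n * (real n + 1) / 4)"
proof -
  have "(\<Sum>k\<in>{1..n}. - real k / 2) = - (\<Sum>k\<in>{1..n}. real k) / 2"
    by (simp add: sum_negf sum_divide_distrib[symmetric])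
  then show ?thesis using sum_id[of n] by simp
qed

lemma TE_prodE: "TE (\<lambda>u t. \<Prod>k\<in>{1..n}. (1 - exp (- (u * real k))) / (u * real k)) (\<lambda>t. 1) (\<lambda>t. - (real n * (real n + 1) / 4))"
proof -
  have h: "TE (\<lambda>u t. \<Prod>k\<in>{1..n}. (1 - exp (- (u * real k))) / (u * real k)) (\<lambda>t. 1 ^ card {1..n})
     (\<lambda>t. (\<Sum>k\<in>{1..n}. - real k / 2) * 1 ^ (card {1..n} - 1))"
    apply (rule TE_prod[where f="\<lambda>k u t. (1 - exp (- (u * real k))) / (u * real k)" and a="\<lambda>t. 1"
          and \<beta>="\<lambda>k t. - real k / 2" and Ma=1])
    apply simp
     apply (rule TE_Efac)
     apply simp
    apply simp
    done
  have e: "(\<Sum>k = Suc 0..n. - (real k / 2)) = - (real n * (real n + 1) / 4)"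
    using sum_half[of n] by simp
  show ?thesis by (rule TE_cong[OF h]) (use e in auto)
qed

lemma TE_EE: "TE (\<lambda>u t. EE i m u) (\<lambda>t. 1) (\<lambda>t. - ((real i * (real i + 1) + real m * (real m + 1)) / 4))"
  using TE_mult[OF TE_prodE[of i] TE_prodE[of m]]
  by (rule TE_cong) (auto simp: EE_def field_simps)


lemma exp_powr_u: "exp (- u) powr y = exp (- (u * y))" for u y :: real
  by (simp add: powr_def)

lemma exp_pow_u: "exp (- u) ^ k = exp (- (u * real k))" for u :: real
  by (simp add: exp_of_nat_mult[symmetric] mult.commute)

lemma qb_exp: "qbinom (exp (- u)) x m = (\<Prod>k\<in>{1..m}. 1 - exp (- (u * (x - real m + real k)))) / (\<Prod>k\<in>{1..m}. 1 - exp (- (u * real k)))"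
  unfolding qbinom_def prod_dividef[symmetric] exp_powr_u exp_pow_u ..

lemma den_exp: assumes "u > 0"
  shows "(\<Prod>k\<in>{1..m}. 1 - exp (- (u * real k))) = (\<Prod>k\<in>{1..m}. (1 - exp (- (u * real k))) / (u * real k)) * (u ^ m * fact m)"
proof -
  have "(\<Prod>k\<in>{1..m}. 1 - exp (- (u * real k))) = (\<Prod>k\<in>{1..m}. ((1 - exp (- (u * real k))) / (u * real k)) * (u * real k))"
    by (rule prod.cong) (use assms in auto)
  also have "\<dots> = (\<Prod>k\<in>{1..m}. (1 - exp (- (u * real k))) / (u * real k)) * (\<Prod>k\<in>{1..m}. u * real k)"
    by (rule prod.distrib)
  also have "(\<Prod>k\<in>{1..m}. u * real k) = u ^ m * fact m"
    by (simp add: prod.distrib fact_prod)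
  finally show ?thesis .
qed

context
  fixes lam c :: real and d p i :: nat
  assumes lam: "lam > 0" and c: "c \<ge> 0" and ip: "i \<le> p"
begin

definition "SS t = exp (- (lam * (c + t)))"
definition "ee t = exp (- (lam * t))"
definition "pre t = exp (- (lam * (c * real (p - i)))) * exp (- (lam * (real p * t)))"

definition "GG u t = pre t * exp (- (u * (real d * real (p - i)))) *
   (\<Prod>k\<in>{1..i}. 1 - SS t * exp (- (u * (real d - real i + real k)))) *
   (\<Prod>k\<in>{1..p-i}. 1 - ee t * exp (- (u * real k)))"

definition "aG t = pre t * (1 - SS t) ^ i * (1 - ee t) ^ (p - i)"
definition "Y t = pre t * SS t * (1 - SS t) ^ (i - 1) * (1 - ee t) ^ (p - i)"
definition "Z t = pre t * ee t * (1 - SS t) ^ i * (1 - ee t) ^ (p - i - 1)"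
definition "c1 = real i * (2 * real d - real i + 1) / 2"
definition "c2 = real (p - i) * (real (p - i) + 1) / 2"
definition "bG t = - (real d * real (p - i)) * aG t + c1 * Y t + c2 * Z t"

lemma bnd01: "t \<in> {0..1} \<Longrightarrow> \<bar>SS t\<bar> \<le> 1 \<and> \<bar>ee t\<bar> \<le> 1 \<and> \<bar>pre t\<bar> \<le> 1 \<and> \<bar>1 - SS t\<bar> \<le> 1 \<and> \<bar>1 - ee t\<bar> \<le> 1"
proof -
  assume t: "t \<in> {0..1}"
  have aux: "\<bar>exp (- x)\<bar> \<le> 1 \<and> \<bar>1 - exp (- x)\<bar> \<le> 1" if "x \<ge> 0" for x :: real
    using that by auto
  have x1: "lam * (c + t) \<ge> 0" "lam * t \<ge> 0" "lam * (c * real (p - i)) + lam * (real p * t) \<ge> 0"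
    using lam c t by auto
  show ?thesis using aux[OF x1(1)] aux[OF x1(2)] aux[OF x1(3)]
    unfolding SS_def ee_def pre_def by (simp add: exp_add[symmetric])
qed

lemma TE_GG: "TE GG aG bG"
proof -
  have P1: "TE (\<lambda>u t. \<Prod>k\<in>{1..i}. 1 - SS t * exp (- (u * (real d - real i + real k))))
     (\<lambda>t. (1 - SS t) ^ card {1..i}) (\<lambda>t. (\<Sum>k\<in>{1..i}. SS t * (real d - real i + real k)) * (1 - SS t) ^ (card {1..i} - 1))"
    by (rule TE_prod[where f="\<lambda>k u t. 1 - SS t * exp (- (u * (real d - real i + real k)))" and a="\<lambda>t. 1 - SS t"
          and \<beta>="\<lambda>k t. SS t * (real d - real i + real k)" and Ma=1])
       (use bnd01 in \<open>auto intro!: TE_fac[where Mg=1]\<close>)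
  have P2: "TE (\<lambda>u t. \<Prod>k\<in>{1..p-i}. 1 - ee t * exp (- (u * real k)))
     (\<lambda>t. (1 - ee t) ^ card {1..p-i}) (\<lambda>t. (\<Sum>k\<in>{1..p-i}. ee t * real k) * (1 - ee t) ^ (card {1..p-i} - 1))"
    by (rule TE_prod[where f="\<lambda>k u t. 1 - ee t * exp (- (u * real k))" and a="\<lambda>t. 1 - ee t"
          and \<beta>="\<lambda>k t. ee t * real k" and Ma=1])
       (use bnd01 in \<open>auto intro!: TE_fac[where Mg=1]\<close>)
  have H0: "TE (\<lambda>u t. pre t) pre (\<lambda>t. 0)" by (rule TE_const[where M=1]) (use bnd01 in auto)
  from TE_mult[OF TE_mult[OF TE_mult[OF H0 TE_exp[of "real d * real (p - i)"]] P1] P2]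
  show ?thesis
  proof (rule TE_cong)
    fix t :: real
    show "pre t * 1 * (1 - SS t) ^ card {1..i} * (1 - ee t) ^ card {1..p - i} = aG t"
      by (simp add: aG_def)
    have s1: "(\<Sum>k\<in>{1..i}. SS t * (real d - real i + real k)) = SS t * c1"
      unfolding sum_distrib_left[symmetric] sum_shift c1_def by simp
    have s2: "(\<Sum>k\<in>{1..p-i}. ee t * real k) = ee t * c2"
      unfolding sum_distrib_left[symmetric] sum_id c2_def by simp
    show "pre t * 1 * (1 - SS t) ^ card {1..i} * ((\<Sum>k = 1..p - i. ee t * real k) * (1 - ee t) ^ (card {1..p - i} - 1)) +
        (pre t * 1 * ((\<Sum>k = 1..i. SS t * (real d - real i + real k)) * (1 - SS t) ^ (card {1..i} - 1)) +
         (pre t * - (real d * real (p - i)) + 0 * 1) * (1 - SS t) ^ card {1..i}) * (1 - ee t) ^ card {1..p - i} = bG t"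
      unfolding s1 s2 by (simp add: bG_def aG_def Y_def Z_def algebra_simps)
    fix u show "pre t * exp (- (u * (real d * real (p - i)))) * (\<Prod>k = 1..i. 1 - SS t * exp (- (u * (real d - real i + real k)))) *
       (\<Prod>k = 1..p - i. 1 - ee t * exp (- (u * real k))) = GG u t"
      by (simp add: GG_def)
  qed
qed

lemma cont_all: "continuous_on {0..1} aG" "continuous_on {0..1} Y" "continuous_on {0..1} Z"
  "continuous_on {0..1} bG" "continuous_on {0..1} (GG u)"
  unfolding aG_def Y_def Z_def bG_def GG_def pre_def SS_def ee_def
  by (intro continuous_intros)+

lemma int_GG: "\<exists>C \<delta>. \<delta> > 0 \<and> (\<forall>u. 0 < u \<longrightarrow> u < \<delta> \<longrightarrow>
     \<bar>integral {0..1} (GG u) - integral {0..1} aG - integral {0..1} bG * u\<bar> \<le> C * u^2)"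
  by (rule TE_integral[OF TE_GG]) (auto intro: cont_all)

lemma int_bG: "integral {0..1} bG = - (real d * real (p - i)) * integral {0..1} aG + c1 * integral {0..1} Y + c2 * integral {0..1} Z"
proof -
  have i: "aG integrable_on {0..1}" "Y integrable_on {0..1}" "Z integrable_on {0..1}"
    using cont_all by (auto intro: integrable_continuous_interval)
  have "integral {0..1} bG = integral {0..1} (\<lambda>t. (- (real d * real (p - i)) * aG t + c1 * Y t) + c2 * Z t)"
    by (simp add: bG_def[abs_def])
  also have "\<dots> = integral {0..1} (\<lambda>t. - (real d * real (p - i)) * aG t + c1 * Y t) + integral {0..1} (\<lambda>t. c2 * Z t)"
    by (intro integral_add integrable_continuous_interval continuous_intros cont_all)
  also have "integral {0..1} (\<lambda>t. - (real d * real (p - i)) * aG t + c1 * Y t) =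
      integral {0..1} (\<lambda>t. - (real d * real (p - i)) * aG t) + integral {0..1} (\<lambda>t. c1 * Y t)"
    by (intro integral_add integrable_continuous_interval continuous_intros cont_all)
  finally show ?thesis by simp
qed

lemma spow: "exp (- lam) powr x = exp (- (lam * x))" by (simp add: powr_def)

lemma A0_eq: "exp (- lam) powr (c * real (p - i)) *
      integral {0..1} (\<lambda>t. exp (- lam) powr (real p * t) * (1 - exp (- lam) powr t) ^ (p - i) * (1 - exp (- lam) powr (c + t)) ^ i)
   = integral {0..1} aG"
proof -
  have "aG = (\<lambda>t. exp (- (lam * (c * real (p - i)))) * (exp (- (lam * (real p * t))) * (1 - exp (- (lam * t))) ^ (p - i) * (1 - exp (- (lam * (c + t)))) ^ i))"
    by (rule ext) (simp add: aG_def pre_def SS_def ee_def)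
  then show ?thesis by (simp add: spow)
qed

lemma A1_eq: "exp (- lam) powr (c * real (p - i + 1)) * (real i * (2 * real d - real i + 1) / 2) *
      integral {0..1} (\<lambda>t. exp (- lam) powr (real (p + 1) * t) * (1 - exp (- lam) powr t) ^ (p - i) * (1 - exp (- lam) powr (c + t)) ^ (i - 1))
   = c1 * integral {0..1} Y"
proof -
  have "Y = (\<lambda>t. exp (- (lam * (c * real (p - i + 1)))) * (exp (- (lam * (real (p + 1) * t))) * (1 - exp (- (lam * t))) ^ (p - i) * (1 - exp (- (lam * (c + t)))) ^ (i - 1)))"
    by (rule ext) (simp add: Y_def pre_def SS_def ee_def exp_add[symmetric] algebra_simps)
  then show ?thesis by (simp add: spow c1_def)
qed

lemma A2_eq: "exp (- lam) powr (c * real (p - i)) * (real (p - i) * real (p - i + 1) / 2) *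
      integral {0..1} (\<lambda>t. exp (- lam) powr (real (p + 1) * t) * (1 - exp (- lam) powr t) ^ (p - i - 1) * (1 - exp (- lam) powr (c + t)) ^ i)
   = c2 * integral {0..1} Z"
proof -
  have "Z = (\<lambda>t. exp (- (lam * (c * real (p - i)))) * (exp (- (lam * (real (p + 1) * t))) * (1 - exp (- (lam * t))) ^ (p - i - 1) * (1 - exp (- (lam * (c + t)))) ^ i))"
    by (rule ext) (simp add: Z_def pre_def SS_def ee_def exp_add[symmetric] algebra_simps)
  then show ?thesis by (simp add: spow c2_def)
qed

lemma repr:
  assumes N: "N > 0"
  shows "fcd (exp (- lam / N)) p i c N d (N * t) =
    GG (lam / N) t / (EE i (p - i) (lam / N) * ((lam / N) ^ p * (fact i * fact (p - i))))"
proof -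
  define u where "u = lam / N"
  have u: "u > 0" using N lam by (simp add: u_def)
  have uN: "u * N = lam" using N by (simp add: u_def)
  have q: "exp (- lam / N) = exp (- u)" by (simp add: u_def)
  have n1: "(\<Prod>k\<in>{1..i}. 1 - exp (- (u * (c * N + real d + N * t - real i + real k)))) =
     (\<Prod>k\<in>{1..i}. 1 - SS t * exp (- (u * (real d - real i + real k))))"
  proof (rule prod.cong)
    fix k assume "k \<in> {1..i}"
    have "u * (c * N + real d + N * t - real i + real k) = (u * N) * (c + t) + u * (real d - real i + real k)"
      by (simp add: algebra_simps)
    then have "u * (c * N + real d + N * t - real i + real k) = lam * (c + t) + u * (real d - real i + real k)"
      by (simp add: uN)
    then show "1 - exp (- (u * (c * N + real d + N * t - real i + real k))) = 1 - SS t * exp (- (u * (real d - real i + real k)))"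
      by (simp add: SS_def exp_add[symmetric])
  qed simp
  have n2: "(\<Prod>k\<in>{1..p-i}. 1 - exp (- (u * (real (p - i) + N * t - real (p - i) + real k)))) =
     (\<Prod>k\<in>{1..p-i}. 1 - ee t * exp (- (u * real k)))"
  proof (rule prod.cong)
    fix k assume "k \<in> {1..p-i}"
    have "u * (real (p - i) + N * t - real (p - i) + real k) = (u * N) * t + u * real k"
      by (simp add: algebra_simps)
    then have "u * (real (p - i) + N * t - real (p - i) + real k) = lam * t + u * real k"
      by (simp add: uN)
    then show "1 - exp (- (u * (real (p - i) + N * t - real (p - i) + real k))) = 1 - ee t * exp (- (u * real k))"
      by (simp add: ee_def exp_add[symmetric])
  qed simp
  have pf: "exp (- u) powr ((c * N + real d) * real (p - i) + real p * (N * t)) =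
     pre t * exp (- (u * (real d * real (p - i))))"
  proof -
    have "u * ((c * N + real d) * real (p - i) + real p * (N * t)) = (u * N) * (c * real (p - i)) + (u * N) * (real p * t) + u * (real d * real (p - i))"
      by (simp add: algebra_simps)
    then have "u * ((c * N + real d) * real (p - i) + real p * (N * t)) = lam * (c * real (p - i)) + lam * (real p * t) + u * (real d * real (p - i))"
      by (simp add: uN)
    then show ?thesis by (simp add: exp_powr_u pre_def exp_add[symmetric])
  qed
  have pp: "u ^ i * u ^ (p - i) = u ^ p" using ip by (simp add: power_add[symmetric])
  have "fcd (exp (- lam / N)) p i c N d (N * t) =
     pre t * exp (- (u * (real d * real (p - i)))) *
     ((\<Prod>k\<in>{1..i}. 1 - SS t * exp (- (u * (real d - real i + real k)))) / (\<Prod>k\<in>{1..i}. 1 - exp (- (u * real k)))) *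
     ((\<Prod>k\<in>{1..p-i}. 1 - ee t * exp (- (u * real k))) / (\<Prod>k\<in>{1..p-i}. 1 - exp (- (u * real k))))"
    unfolding fcd_def q qb_exp pf n1 n2 ..
  also have "\<dots> = GG u t / ((\<Prod>k\<in>{1..i}. 1 - exp (- (u * real k))) * (\<Prod>k\<in>{1..p-i}. 1 - exp (- (u * real k))))"
    by (simp add: GG_def)
  also have "(\<Prod>k\<in>{1..i}. 1 - exp (- (u * real k))) * (\<Prod>k\<in>{1..p-i}. 1 - exp (- (u * real k))) =
      EE i (p - i) u * (u ^ p * (fact i * fact (p - i)))"
    unfolding den_exp[OF u] EE_def pp[symmetric] by (simp add: algebra_simps)
  finally show ?thesis by (simp add: u_def)
qed

lemma core_main:
  assumes A0: "A0 = integral {0..1} aG" and A1: "A1 = c1 * integral {0..1} Y" and A2: "A2 = c2 * integral {0..1} Z"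
    and A3: "A3 = (4 * real d * real i + 2 * real i ^ 2 + real p - 4 * real d * real p
                 - 2 * real i * real p + real p ^ 2) / 4 * A0"
  shows "(\<lambda>N::nat. integral {0..1} (\<lambda>t. fcd (exp (- lam / real N)) p i c (real N) d (real N * t))
            - (real N / lam) ^ p * (1 / (fact i * fact (p - i)))
              * (A0 + (A1 + A2 + A3) * (lam / real N)))
         \<in> O(\<lambda>N. (real N / lam) ^ p * (1 / real N ^ 2))"
proof -
  define \<sigma> where "\<sigma> = (real i * (real i + 1) + real (p - i) * (real (p - i) + 1)) / 4"
  define B where "B = A1 + A2 + A3"
  obtain C1 \<delta>1 where d1: "\<delta>1 > 0" and h1: "\<forall>u. 0 < u \<longrightarrow> u < \<delta>1 \<longrightarrow>
     \<bar>integral {0..1} (GG u) - integral {0..1} aG - integral {0..1} bG * u\<bar> \<le> C1 * u^2"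
    using int_GG by blast
  have TEE: "TE (\<lambda>u t. EE i (p - i) u) (\<lambda>t. 1) (\<lambda>t. - \<sigma>)" using TE_EE[of i "p - i"] unfolding \<sigma>_def .
  obtain C2 \<delta>2 where d2: "\<delta>2 > 0" and h2: "\<forall>u t. 0 < u \<longrightarrow> u < \<delta>2 \<longrightarrow> (t::real) \<in> {0..1} \<longrightarrow>
     \<bar>EE i (p - i) u - 1 - (- \<sigma>) * u\<bar> \<le> C2 * u^2"
  proof -
    from TEE have "\<exists>C \<delta>. \<delta> > 0 \<and> (\<forall>u t. 0 < u \<longrightarrow> u < \<delta> \<longrightarrow> (t::real) \<in> {0..1} \<longrightarrow>
     \<bar>EE i (p - i) u - 1 - (- \<sigma>) * u\<bar> \<le> C * u^2)" unfolding TE_def by (rule conjunct2)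
    then show ?thesis using that by blast
  qed
  have m: "real (p - i) = real p - real i" using ip by simp
  have hJ: "integral {0..1} bG = B - \<sigma> * A0"
    unfolding int_bG B_def A1 A2 A3 \<sigma>_def A0 m by (simp add: field_simps power2_eq_square)
  define X where "X = \<bar>\<sigma>\<bar> + \<bar>C2\<bar>"
  have X: "X \<ge> 0" by (simp add: X_def)
  define \<delta> where "\<delta> = min (min \<delta>1 \<delta>2) (min 1 (1 / (2 * X + 2)))"
  have d: "\<delta> > 0" using d1 d2 X by (simp add: \<delta>_def)
  define K where "K = 2 * (\<bar>C1\<bar> + \<bar>C2\<bar> * (\<bar>A0\<bar> + \<bar>B\<bar>) + \<bar>\<sigma>\<bar> * \<bar>B\<bar>)"
  have K0: "K \<ge> 0" by (simp add: K_def)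
  have key: "\<bar>integral {0..1} (GG u) / EE i (p - i) u - (A0 + B * u)\<bar> \<le> K * u^2" if u: "0 < u" "u < \<delta>" for u
  proof -
    have u1: "u < \<delta>1" "u < \<delta>2" "u \<le> 1" "u < 1 / (2 * X + 2)" using u by (auto simp: \<delta>_def)
    have "u * (2 * X + 2) < 1" using u1(4) X by (simp add: less_divide_eq)
    moreover have "u * (2 * X + 2) = 2 * (X * u) + 2 * u" by (simp add: algebra_simps)
    ultimately have "X * u \<le> 1/2" using u by linarith
    then have us: "\<bar>\<sigma>\<bar> * u + \<bar>C2\<bar> * u \<le> 1/2" by (simp add: X_def algebra_simps)
    have e1: "\<bar>integral {0..1} (GG u) - A0 - integral {0..1} bG * u\<bar> \<le> C1 * u^2" using h1 u u1 A0 by auto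
    have e2: "\<bar>EE i (p - i) u - 1 - (- \<sigma>) * u\<bar> \<le> C2 * u^2" by (rule h2[rule_format, of u 0, OF u(1) u1(2)]) simp
    show ?thesis using final_est[OF e1 e2 hJ u(1) u1(3) us] unfolding K_def .
  qed
  define F :: real where "F = fact i * fact (p - i)"
  have "(1::real) * 1 \<le> fact i * fact (p - i)" by (rule mult_mono) auto
  then have F: "F \<ge> 1" unfolding F_def by simp
  show ?thesis
  proof (rule bigoI[where c = "K * lam^2"])
    show "\<forall>\<^sub>F N in sequentially. norm (integral {0..1} (\<lambda>t. fcd (exp (- lam / real N)) p i c (real N) d (real N * t))
            - (real N / lam) ^ p * (1 / (fact i * fact (p - i))) * (A0 + (A1 + A2 + A3) * (lam / real N)))
        \<le> K * lam^2 * norm ((real N / lam) ^ p * (1 / real N ^ 2))"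
      unfolding eventually_sequentially
    proof (intro exI allI impI)
      fix N :: nat assume NN: "Suc (nat \<lceil>lam / \<delta>\<rceil>) \<le> N"
      have Nl: "real N > lam / \<delta>" using NN by linarith
      have "lam / \<delta> > 0" using lam d by simp
      then have Np: "real N > 0" using Nl by linarith
      define u where "u = lam / real N"
      have u: "0 < u" "u < \<delta>" using Np lam Nl d by (auto simp: u_def divide_less_eq field_simps)
      have Nu: "real N / lam = 1 / u" by (simp add: u_def)
      have Nu2: "1 / real N = u / lam" using lam by (simp add: u_def)
      define J where "J = integral {0..1} (GG u)"
      define E where "E = EE i (p - i) u"
      have I: "integral {0..1} (\<lambda>t. fcd (exp (- lam / real N)) p i c (real N) d (real N * t)) = J / (E * (u ^ p * F))"
        unfolding repr[OF Np] J_def E_def F_def u_def by (simp add: integral_divide)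
      have up: "u ^ p > 0" using u by simp
      have eq: "J / (E * (u ^ p * F)) - (1 / u) ^ p * (1 / F) * (A0 + B * u) = (J / E - (A0 + B * u)) / (u ^ p * F)"
      proof -
        have a: "(1/u)^p * (1/F) * (A0+B*u) = (A0+B*u)/(u^p*F)" by (simp add: power_one_over)
        have b: "J/(E*(u^p*F)) = (J/E)/(u^p*F)" by (simp add: divide_divide_eq_left)
        show ?thesis unfolding a b by (simp add: diff_divide_distrib)
      qed
      have "norm (integral {0..1} (\<lambda>t. fcd (exp (- lam / real N)) p i c (real N) d (real N * t))
            - (real N / lam) ^ p * (1 / (fact i * fact (p - i))) * (A0 + (A1 + A2 + A3) * (lam / real N)))
          = \<bar>J / E - (A0 + B * u)\<bar> / (u ^ p * F)"
        unfolding I Nu B_def[symmetric] F_def[symmetric] u_def[symmetric] eq using up F by simp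
      also have "\<dots> \<le> K * u^2 / (u ^ p * F)"
        by (rule divide_right_mono[OF key[OF u, folded J_def E_def]]) (use up F in simp)
      also have "\<dots> \<le> K * u^2 / u ^ p"
      proof -
        have m1: "u^p \<le> u^p*F" using mult_left_mono[OF F, of "u^p"] up by simp
        have m2: "0 \<le> K*u^2" using K0 by simp
        have m3: "0 < u^p*F*u^p" using up F by simp
        show ?thesis by (rule divide_left_mono[OF m1 m2 m3])
      qed
      also have "\<dots> = K * lam^2 * norm ((real N / lam) ^ p * (1 / real N ^ 2))"
      proof -
        have pos: "(1/u)^p*(u^2/lam^2) \<ge> 0" using u by simp
        have "1/real N^2 = (1/real N)^2" by (simp add: power_one_over)
        also have "\<dots> = (u/lam)^2" by (simp only: Nu2)
        also have "\<dots> = u^2/lam^2" by (simp add: power_divide)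
        finally have n2: "1/real N^2 = u^2/lam^2" .
        have eq: "K * lam^2 * ((1/u)^p * (u^2/lam^2)) = K * u^2 / u ^ p" using lam u by (simp add: power_one_over)
        have h: "norm ((1/u) ^ p * (1 / real N ^ 2)) = (1/u)^p*(u^2/lam^2)" by (simp only: real_norm_def n2 abs_of_nonneg[OF pos])
        show ?thesis unfolding Nu h by (rule eq[symmetric])
      qed
      finally show "norm (integral {0..1} (\<lambda>t. fcd (exp (- lam / real N)) p i c (real N) d (real N * t))
            - (real N / lam) ^ p * (1 / (fact i * fact (p - i))) * (A0 + (A1 + A2 + A3) * (lam / real N)))
        \<le> K * lam^2 * norm ((real N / lam) ^ p * (1 / real N ^ 2))" .
    qed
  qed
qed

end
theorem lemma2p8:
  fixes c lam :: real and d p i :: nat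
  assumes "c \<ge> 0" and "lam > 0" and "p \<ge> 1" and "i \<le> p"
  defines "s \<equiv> exp (- lam)"
  defines "A0 \<equiv> s powr (c * real (p - i)) *
      integral {0..1} (\<lambda>t. s powr (real p * t) * (1 - s powr t) ^ (p - i) * (1 - s powr (c + t)) ^ i)"
  defines "A1 \<equiv> s powr (c * real (p - i + 1)) * (real i * (2 * real d - real i + 1) / 2) *
      integral {0..1} (\<lambda>t. s powr (real (p + 1) * t) * (1 - s powr t) ^ (p - i) * (1 - s powr (c + t)) ^ (i - 1))"
  defines "A2 \<equiv> s powr (c * real (p - i)) * (real (p - i) * real (p - i + 1) / 2) *
      integral {0..1} (\<lambda>t. s powr (real (p + 1) * t) * (1 - s powr t) ^ (p - i - 1) * (1 - s powr (c + t)) ^ i)"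
  defines "A3 \<equiv> (4 * real d * real i + 2 * real i ^ 2 + real p - 4 * real d * real p
                 - 2 * real i * real p + real p ^ 2) / 4 * A0"
  shows "(\<lambda>N::nat. integral {0..1} (\<lambda>t. fcd (exp (- lam / real N)) p i c (real N) d (real N * t))
            - (real N / lam) ^ p * (1 / (fact i * fact (p - i)))
              * (A0 + (A1 + A2 + A3) * (lam / real N)))
         \<in> O(\<lambda>N. (real N / lam) ^ p * (1 / real N ^ 2))"
  apply (rule core_main[OF assms(2) assms(1) assms(4)])
     apply (unfold A0_def s_def, rule A0_eq[OF assms(2) assms(1) assms(4)])
    apply (unfold A1_def s_def, rule A1_eq[OF assms(2) assms(1) assms(4)])
   apply (unfold A2_def s_def, rule A2_eq[OF assms(2) assms(1) assms(4)])
  apply (simp only: A3_def A0_def s_def)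
  done

end
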